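(* Let $X$ be a real random variable with cumulative distribution function $F$ and assume there exists $\epsilon>0$ with $\mathbb{E}[e^{-\epsilon X}]<\infty$. Let $p(-k)=\int_{-\infty}^{-k}(e^{-k}-e^x)\,dF(x)$. If $k\mapsto-\log F(-k)$ is regularly varying (at $+\infty$), then $k\mapsto-\log p(-k)$ is regularly varying and, as $k\to\infty$, $$-\log p(-k)\sim k-\log F(-k).$$
   Context: A measurable function $g$, positive for large $x$, is regularly varying (at $+\infty$) if there is $\alpha\in\mathbb{R}$ with $\lim_{x\to\infty}g(\lambda x)/g(x)=\lambda^\alpha$ for every $\lambda>0$. $g\sim h$ means $g(k)/h(k)\to1$ as $k\to\infty$. *)

theory Defs
  imports "HOL-Probability.Probability" "HOL-Library.Landau_Symbols"
begin

definition regularly_varying :: "(real \<Rightarrow> real) \<Rightarrow> bool" where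
  "regularly_varying g \<longleftrightarrow>
     g \<in> borel_measurable borel \<and>
     (\<forall>\<^sub>F x in at_top. g x > 0) \<and>
     (\<exists>\<alpha>::real. \<forall>l>0. ((\<lambda>x. g (l * x) / g x) \<longlongrightarrow> l powr \<alpha>) at_top)"

end

theory Submission imports Defs begin

lemma idx_ge1:
  fixes g :: "real \<Rightarrow> real" and K c \<alpha> :: real
  assumes K: "K > 0"
  and lin: "\<And>x. K \<le> x \<Longrightarrow> c * x \<le> g x" and c: "c > 0"
  and rv: "((\<lambda>x. g (2*x) / g x) \<longlongrightarrow> 2 powr \<alpha>) at_top"
  shows "\<alpha> \<ge> 1"
proof (rule ccontr)
  assume "\<not> \<alpha> \<ge> 1"
  define q where "q = (2 powr (\<alpha>-1) + 1)/2"
  have p1: "2 powr (\<alpha>-1) < 1" using \<open>\<not> \<alpha> \<ge> 1\<close> by (simp add: powr_less_one)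
  have q1: "q < 1" "q > 0" unfolding q_def using p1 powr_ge_zero[of 2 "\<alpha>-1"] by (auto intro!: conjunctionI, linarith+)
  have "2 powr \<alpha> = 2 * 2 powr (\<alpha>-1)" by (simp add: powr_diff)
  then have "2 powr \<alpha> < 2*q" using p1 unfolding q_def by simp
  then have "eventually (\<lambda>x. g(2*x)/g x < 2*q) at_top" using order_tendstoD(2)[OF rv] by blast
  then obtain K2 where K2: "\<And>x. x\<ge>K2 \<Longrightarrow> g(2*x)/g x < 2*q" by (auto simp: eventually_at_top_linorder)
  define K3 where "K3 = max K K2"
  have K3: "K3 > 0" "K3 \<ge> K" "K3 \<ge> K2" using K unfolding K3_def by auto
  have gpos: "g x > 0" if "x \<ge> K" for x using lin[OF that] c K that
    by (smt (verit) mult_pos_pos)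
  have step: "g(2*x) \<le> 2*q*g x" if "x \<ge> K3" for x
  proof -
    have "g x > 0" using gpos K3 that by auto
    then show ?thesis using K2[of x] K3 that by (simp add: divide_less_eq)
  qed
  have ind: "g (2^n * K3) \<le> (2*q)^n * g K3" for n
  proof (induction n)
    case 0 then show ?case by simp
  next
    case (Suc n)
    have "(1::real) \<le> 2^n" by simp
    then have "2^n * K3 \<ge> K3" using K3 by (simp add: mult_le_cancel_right1)
    then have "g (2^Suc n * K3) \<le> 2*q*g (2^n*K3)" using step[of "2^n*K3"] by (simp add: mult.assoc)
    also have "\<dots> \<le> 2*q*((2*q)^n * g K3)" using Suc q1 by (simp add: mult_left_mono)
    finally show ?case by (simp add: mult.assoc)
  qed
  have bnd: "c * K3 \<le> q^n * g K3" for n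
  proof -
    have "(1::real) \<le> 2^n" by simp
    then have "2^n * K3 \<ge> K" using K3 by (smt (verit) mult_le_cancel_right1)
    then have "c * (2^n*K3) \<le> (2*q)^n * g K3" using lin ind[of n] by smt
    then have "2^n * (c*K3) \<le> 2^n * (q^n * g K3)" by (simp add: power_mult_distrib algebra_simps)
    then show ?thesis by simp
  qed
  have "(\<lambda>n. q^n * g K3) \<longlonglongrightarrow> 0 * g K3"
    by (intro tendsto_intros LIMSEQ_power_zero) (use q1 in auto)
  then have "eventually (\<lambda>n. q^n * g K3 < c * K3) sequentially"
    using c K3 by (intro order_tendstoD(2)) auto
  then obtain n where "q^n * g K3 < c*K3" by (auto simp: eventually_sequentially)
  with bnd[of n] show False by simp
qed

lemma idx_gt1:
  fixes g :: "real \<Rightarrow> real" and K \<alpha> :: real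
  assumes K: "K > 0"
  and mono: "\<And>x y. K \<le> x \<Longrightarrow> x \<le> y \<Longrightarrow> g x \<le> g y"
  and gpos: "\<And>x. K \<le> x \<Longrightarrow> g x > 0"
  and rv: "((\<lambda>x. g (2*x) / g x) \<longlongrightarrow> 2 powr \<alpha>) at_top"
  and a: "\<alpha> > 1"
  shows "filterlim (\<lambda>x. g x / x) at_top at_top"
proof -
  define q where "q = (2 powr (\<alpha>-1) + 1)/2"
  have p1: "2 powr (\<alpha>-1) > 1" using a by simp
  have q1: "q > 1" unfolding q_def using p1 by (simp add: field_simps)
  have "2 powr \<alpha> = 2 * 2 powr (\<alpha>-1)" by (simp add: powr_diff)
  then have "2 powr \<alpha> > 2*q" using p1 unfolding q_def by simp
  then have "eventually (\<lambda>x. g(2*x)/g x > 2*q) at_top" using order_tendstoD(1)[OF rv] by blast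
  then obtain K2 where K2: "\<And>x. x\<ge>K2 \<Longrightarrow> g(2*x)/g x > 2*q" by (auto simp: eventually_at_top_linorder)
  define K3 where "K3 = max K K2"
  have K3: "K3 > 0" "K3 \<ge> K" "K3 \<ge> K2" using K unfolding K3_def by auto
  have step: "g(2*x)/(2*x) \<ge> q*(g x / x)" if "x \<ge> K3" for x
  proof -
    have "g x > 0" "x > 0" using gpos K3 that by auto
    then have "g(2*x) \<ge> 2*q*g x" using K2[of x] K3 that by (simp add: less_divide_eq)
    then show ?thesis using \<open>x > 0\<close> by (simp add: field_simps)
  qed
  define m0 where "m0 = g K3 / (2*K3)"
  have m0: "m0 > 0" using gpos K3 unfolding m0_def by auto
  have R: "\<forall>x. K3 \<le> x \<and> x < 2^n * K3 \<longrightarrow> g x / x \<ge> m0" for n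
  proof (induction n)
    case 0 then show ?case by simp
  next
    case (Suc n)
    show ?case
    proof (intro allI impI)
      fix x assume x: "K3 \<le> x \<and> x < 2 ^ Suc n * K3"
      show "g x / x \<ge> m0"
      proof (cases "x < 2*K3")
        case True
        have "g K3 \<le> g x" using mono x K3 by auto
        then have "g K3 / (2*K3) \<le> g x / (2*K3)" using K3 by (simp add: divide_right_mono)
        also have "\<dots> \<le> g x / x" using True x K3 gpos[of x]
          by (intro divide_left_mono) auto
        finally show ?thesis unfolding m0_def .
      next
        case False
        then have "K3 \<le> x/2 \<and> x/2 < 2^n * K3" using x by auto
        then have "g (x/2) / (x/2) \<ge> m0" using Suc by blast
        moreover have "g (2*(x/2))/(2*(x/2)) \<ge> q*(g (x/2) / (x/2))" using step \<open>K3 \<le> x/2 \<and> _\<close> by blast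
        moreover have "q*(g (x/2) / (x/2)) \<ge> g (x/2) / (x/2)" using q1 m0 calculation(1)
          by (smt (verit) mult_le_cancel_right1)
        ultimately show ?thesis by simp
      qed
    qed
  qed
  have base: "g x / x \<ge> m0" if "x \<ge> K3" for x
  proof -
    obtain n where "x / K3 < 2^n" using real_arch_pow[of 2 "x/K3"] by auto
    then have "x < 2^n * K3" using K3 by (simp add: divide_less_eq)
    then show ?thesis using R[of n] that by blast
  qed
  have Q: "\<forall>x. 2^n * K3 \<le> x \<longrightarrow> g x / x \<ge> q^n * m0" for n
  proof (induction n)
    case 0 then show ?case using base by simp
  next
    case (Suc n)
    show ?case
    proof (intro allI impI)
      fix x assume x: "2 ^ Suc n * K3 \<le> x"
      then have x2: "2^n*K3 \<le> x/2" by simp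
      have "(1::real) \<le> 2^n" by simp
      then have "K3 \<le> x/2" using x2 K3 by (smt (verit) mult_le_cancel_right1)
      define a where "a = g (x/2) / (x/2)"
      have h1: "g (2*(x/2))/(2*(x/2)) \<ge> q*a" unfolding a_def using step \<open>K3 \<le> x/2\<close> by blast
      have h2: "a \<ge> q^n * m0" unfolding a_def using Suc x2 by blast
      have h3: "q*a \<ge> q*(q^n * m0)" using h2 q1 by (intro mult_left_mono) auto
      show "g x / x \<ge> q ^ Suc n * m0" using h1 h3 by (simp add: mult.assoc)
    qed
  qed
  show ?thesis
    unfolding filterlim_at_top
  proof
    fix Z :: real
    obtain n where n: "Z / m0 < q^n" using real_arch_pow[OF q1, of "Z/m0"] by auto
    then have "Z \<le> q^n * m0" using m0 by (simp add: divide_less_eq)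
    then show "eventually (\<lambda>x. Z \<le> g x / x) at_top"
      unfolding eventually_at_top_linorder using Q[of n] by force
  qed
qed


lemma frac_aux:
  fixes A B C D :: real
  shows "B > 0 \<Longrightarrow> C > 0 \<Longrightarrow> D > 0 \<Longrightarrow> A > 0 \<Longrightarrow> (A/B)*(B/C)/(D/C) = A/D"
  by (simp add: field_simps)

lemma rv_aux:
  fixes g h :: "real \<Rightarrow> real" and K c d \<alpha> :: real
  assumes K: "K > 0"
  and mono: "\<And>x y. K \<le> x \<Longrightarrow> x \<le> y \<Longrightarrow> g x \<le> g y"
  and lin: "\<And>x. K \<le> x \<Longrightarrow> c * x \<le> g x" and c: "c > 0"
  and rv: "\<And>l. l > 0 \<Longrightarrow> ((\<lambda>x. g (l*x) / g x) \<longlongrightarrow> l powr \<alpha>) at_top"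
  and hb: "\<And>x. K \<le> x \<Longrightarrow> x + g x \<le> h x \<and> h x \<le> (x+1) + g (x+1) + d"
  shows "(\<exists>\<beta>. \<forall>l>0. ((\<lambda>x. h (l*x) / h x) \<longlongrightarrow> l powr \<beta>) at_top) \<and>
         ((\<lambda>x. h x / (x + g x)) \<longlongrightarrow> 1) at_top"
proof -
  have gpos: "g x > 0" if "x \<ge> K" for x using lin[OF that] c K that
    by (smt (verit) mult_pos_pos)
  have a1: "\<alpha> \<ge> 1" using idx_ge1[OF K lin c rv[of 2]] by simp
  define \<beta> where "\<beta> = (if \<alpha> > 1 then \<alpha> else 1)"
  have b1: "\<beta> \<ge> 1" unfolding \<beta>_def by auto
  define G where "G x = x + g x" for x
  have Gpos: "G x > 0" "G x \<ge> x" if "x \<ge> K" for x using gpos[OF that] that K unfolding G_def by auto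
  have Gmono: "G x \<le> G y" if "K \<le> x" "x \<le> y" for x y using mono[OF that] that unfolding G_def by auto
  have Gtop: "filterlim G at_top at_top"
    by (rule filterlim_at_top_mono[OF filterlim_ident])
       (use Gpos in \<open>auto simp: eventually_at_top_linorder\<close>)
  have Grv: "((\<lambda>x. G (l*x) / G x) \<longlongrightarrow> l powr \<beta>) at_top" if l: "l > 0" for l
  proof -
    define w where "w x = x / G x" for x
    define r where "r x = g (l*x) / g x" for x
    have r: "(r \<longlongrightarrow> l powr \<alpha>) at_top" unfolding r_def using rv[OF l] .
    have w01: "0 \<le> w x \<and> w x \<le> 1" if "x \<ge> K" for x
      using Gpos[OF that] that K unfolding w_def by (auto simp: divide_le_eq_1)
    have eq: "G (l*x) / G x = w x * l + (1 - w x) * r x" if "x \<ge> K" for x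
    proof -
      have "G x > 0" "g x > 0" using Gpos gpos that by auto
      have e1: "1 - w x = g x / G x" using \<open>G x > 0\<close> unfolding w_def by (simp add: field_simps G_def)
      have "w x * l + (1 - w x) * r x = (l*x)/G x + g (l*x)/G x"
        unfolding e1 unfolding w_def r_def using \<open>g x > 0\<close> by simp
      then show ?thesis by (simp add: G_def add_divide_distrib)
    qed
    have ev: "eventually (\<lambda>x. G (l*x) / G x = w x * l + (1 - w x) * r x) at_top"
      using eq by (auto simp: eventually_at_top_linorder)
    show ?thesis
    proof (cases "\<alpha> > 1")
      case True
      have "filterlim (\<lambda>x. g x / x) at_top at_top"
        using idx_gt1[OF K mono gpos rv[of 2] True] by simp
      then have "((\<lambda>x. inverse (g x / x)) \<longlongrightarrow> 0) at_top" by (rule tendsto_inverse_0_at_top)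
      then have i0: "((\<lambda>x. x / g x) \<longlongrightarrow> 0) at_top" by simp
      have w0: "(w \<longlongrightarrow> 0) at_top"
      proof (rule tendsto_sandwich[OF _ _ tendsto_const i0])
        show "eventually (\<lambda>x. 0 \<le> w x) at_top" using w01 by (auto simp: eventually_at_top_linorder)
        show "eventually (\<lambda>x. w x \<le> x / g x) at_top"
          unfolding eventually_at_top_linorder
        proof (intro exI[of _ K] allI impI)
          fix x assume x: "K \<le> x"
          then show "w x \<le> x / g x" using gpos[OF x] K unfolding w_def G_def
            by (intro divide_left_mono) auto
        qed
      qed
      have "((\<lambda>x. w x * l + (1 - w x) * r x) \<longlongrightarrow> 0 * l + (1 - 0) * l powr \<alpha>) at_top"
        by (intro tendsto_intros w0 r)
      then have "((\<lambda>x. w x * l + (1 - w x) * r x) \<longlongrightarrow> l powr \<beta>) at_top"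
        using True unfolding \<beta>_def by simp
      then show ?thesis using tendsto_cong[OF ev] by simp
    next
      case False
      then have "\<alpha> = 1" "\<beta> = 1" using a1 unfolding \<beta>_def by auto
      then have r1: "(r \<longlongrightarrow> l) at_top" using r l by simp
      have rl: "((\<lambda>x. r x - l) \<longlongrightarrow> 0) at_top" using tendsto_diff[OF r1 tendsto_const[of l]] by simp
      have "((\<lambda>x. (1 - w x) * (r x - l)) \<longlongrightarrow> 0) at_top"
      proof (rule Lim_null_comparison[OF _ tendsto_rabs_zero[OF rl]])
        show "eventually (\<lambda>x. norm ((1 - w x) * (r x - l)) \<le> \<bar>r x - l\<bar>) at_top"
          unfolding eventually_at_top_linorder
        proof (intro exI[of _ K] allI impI)
          fix x assume x: "K \<le> x"
          have "norm ((1 - w x) * (r x - l)) = \<bar>1 - w x\<bar> * \<bar>r x - l\<bar>" by (simp add: abs_mult)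
          also have "\<dots> \<le> 1 * \<bar>r x - l\<bar>" using w01[OF x] by (intro mult_right_mono) auto
          finally show "norm ((1 - w x) * (r x - l)) \<le> \<bar>r x - l\<bar>" by simp
        qed
      qed
      then have "((\<lambda>x. l + (1 - w x) * (r x - l)) \<longlongrightarrow> l + 0) at_top"
        by (intro tendsto_intros)
      moreover have "\<And>x. l + (1 - w x) * (r x - l) = w x * l + (1 - w x) * r x"
        by (simp add: algebra_simps)
      ultimately have "((\<lambda>x. w x * l + (1 - w x) * r x) \<longlongrightarrow> l powr \<beta>) at_top"
        using \<open>\<beta> = 1\<close> l by simp
      then show ?thesis using tendsto_cong[OF ev] by simp
    qed
  qed
  have Gstep: "((\<lambda>x. G (x+1) / G x) \<longlongrightarrow> 1) at_top"
  proof (rule order_tendstoI)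
    fix a :: real assume a: "a < 1"
    show "eventually (\<lambda>x. a < G (x+1) / G x) at_top"
      unfolding eventually_at_top_linorder
    proof (intro exI[of _ K] allI impI)
      fix x assume x: "K \<le> x"
      have "G x \<le> G (x+1)" using Gmono[OF x] by simp
      then have "1 \<le> G (x+1) / G x" using Gpos[OF x] by simp
      then show "a < G (x+1) / G x" using a by simp
    qed
  next
    fix a :: real assume a: "a > 1"
    define l where "l = a powr (1 / (2*\<beta>))"
    have l1: "l > 1" unfolding l_def using a b1 by (intro gr_one_powr) auto
    have "l powr \<beta> = a powr (1/2)" unfolding l_def using b1 by (simp add: powr_powr)
    also have "\<dots> < a powr 1" using a by (intro powr_less_mono) auto
    finally have la: "l powr \<beta> < a" using a by simp
    have "eventually (\<lambda>x. G (l*x) / G x < a) at_top"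
      using order_tendstoD(2)[OF Grv la] l1 by simp
    then obtain K2 where K2: "\<And>x. x \<ge> K2 \<Longrightarrow> G (l*x) / G x < a"
      by (auto simp: eventually_at_top_linorder)
    show "eventually (\<lambda>x. G (x+1) / G x < a) at_top"
      unfolding eventually_at_top_linorder
    proof (intro exI[of _ "max (max K K2) (1/(l-1))"] allI impI)
      fix x assume x: "max (max K K2) (1/(l-1)) \<le> x"
      then have "1 \<le> x * (l - 1)" using l1 by (simp add: divide_le_eq)
      then have "x + 1 \<le> l * x" by (simp add: algebra_simps)
      then have "G (x+1) \<le> G (l*x)" using Gmono[of "x+1" "l*x"] x K by auto
      then have "G (x+1) / G x \<le> G (l*x) / G x" using Gpos[of x] x by (intro divide_right_mono) auto
      then show "G (x+1) / G x < a" using K2[of x] x by simp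
    qed
  qed
  have hG: "((\<lambda>x. h x / G x) \<longlongrightarrow> 1) at_top"
  proof (rule tendsto_sandwich[OF _ _ tendsto_const])
    show "eventually (\<lambda>x. 1 \<le> h x / G x) at_top"
      unfolding eventually_at_top_linorder
      using hb Gpos by (intro exI[of _ K]) (auto simp: G_def)
    show "eventually (\<lambda>x. h x / G x \<le> G (x+1) / G x + d / G x) at_top"
      unfolding eventually_at_top_linorder
    proof (intro exI[of _ K] allI impI)
      fix x assume x: "K \<le> x"
      have "h x \<le> G (x+1) + d" using hb[OF x] unfolding G_def by simp
      then show "h x / G x \<le> G (x+1) / G x + d / G x" using Gpos[OF x]
        by (simp add: add_divide_distrib[symmetric] divide_right_mono)
    qed
    have "((\<lambda>x. d / G x) \<longlongrightarrow> 0) at_top"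
      by (rule tendsto_divide_0[OF tendsto_const filterlim_at_top_imp_at_infinity[OF Gtop]])
    from tendsto_add[OF Gstep this]
    show "((\<lambda>x. G (x+1) / G x + d / G x) \<longlongrightarrow> 1) at_top" by simp
  qed
  have hrv: "((\<lambda>x. h (l*x) / h x) \<longlongrightarrow> l powr \<beta>) at_top" if l: "l > 0" for l
  proof -
    have lx: "filterlim (\<lambda>x. l * x) at_top at_top"
      by (rule filterlim_tendsto_pos_mult_at_top[OF tendsto_const l filterlim_ident])
    have h1: "((\<lambda>x. h (l*x) / G (l*x)) \<longlongrightarrow> 1) at_top"
      using filterlim_compose[OF hG lx] by simp
    have "((\<lambda>x. (h (l*x) / G (l*x)) * (G (l*x) / G x) / (h x / G x)) \<longlongrightarrow> 1 * l powr \<beta> / 1) at_top"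
      by (intro tendsto_intros h1 Grv l hG) simp
    then have "((\<lambda>x. (h (l*x) / G (l*x)) * (G (l*x) / G x) / (h x / G x)) \<longlongrightarrow> l powr \<beta>) at_top"
      by simp
    moreover have "eventually (\<lambda>x. (h (l*x) / G (l*x)) * (G (l*x) / G x) / (h x / G x) = h (l*x) / h x) at_top"
    proof -
      have "eventually (\<lambda>x. K \<le> l * x) at_top" using lx by (simp add: filterlim_at_top)
      moreover have "eventually (\<lambda>x. K \<le> x) at_top" by simp
      ultimately show ?thesis
      proof eventually_elim
        case (elim x)
        have "G (l*x) > 0" "G x > 0" using Gpos elim by auto
        moreover have "h x > 0" "h (l*x) > 0" using hb[of x] hb[of "l*x"] Gpos[of x] Gpos[of "l*x"] elim
          unfolding G_def by auto
        ultimately show ?case by (rule frac_aux)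
      qed
    qed
    ultimately show ?thesis by (rule Lim_transform_eventually)
  qed
  show ?thesis using hrv hG unfolding G_def by blast
qed


theorem lemma5:
  fixes M :: "'a measure" and X :: "'a \<Rightarrow> real" and F p :: "real \<Rightarrow> real"
  assumes "prob_space M"
    and "X \<in> borel_measurable M"
    and "\<And>x. F x = measure M {\<omega> \<in> space M. X \<omega> \<le> x}"
    and "\<exists>\<epsilon>>0. integrable M (\<lambda>\<omega>. exp (- \<epsilon> * X \<omega>))"
    and "\<And>k. p (-k) = (LINT x:{..-k}|distr M borel X. exp (-k) - exp x)"
    and "regularly_varying (\<lambda>k. - ln (F (-k)))"
  shows "regularly_varying (\<lambda>k. - ln (p (-k))) \<and>
         (\<lambda>k. - ln (p (-k))) \<sim>[at_top] (\<lambda>k. k - ln (F (-k)))"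
proof -
  interpret P: prob_space M by fact
  define \<mu> where "\<mu> = distr M borel X"
  interpret Q: prob_space \<mu> unfolding \<mu>_def by (rule P.prob_space_distr) (use assms(2) in simp)
  have Fmu: "F x = measure \<mu> {..x}" for x
  proof -
    have "measure \<mu> {..x} = measure M (X -` {..x} \<inter> space M)"
      unfolding \<mu>_def by (rule measure_distr) (use assms(2) in auto)
    also have "X -` {..x} \<inter> space M = {\<omega> \<in> space M. X \<omega> \<le> x}" by auto
    finally show ?thesis using assms(3) by simp
  qed
  have sp: "space \<mu> = UNIV" "sets \<mu> = sets borel" unfolding \<mu>_def by auto
  have Fmono: "F x \<le> F y" if "x \<le> y" for x y
    unfolding Fmu using that sp by (intro Q.finite_measure_mono) auto
  have Fnn: "F x \<ge> 0" for x unfolding Fmu by simp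
  define q where "q k x = max 0 (exp (-k) - exp x)" for k x :: real
  have qint: "integrable \<mu> (q k)" for k
  proof (rule Q.integrable_const_bound[where B="exp (-k)"])
    show "AE x in \<mu>. norm (q k x) \<le> exp (-k)" unfolding q_def by auto
    have qm: "q k \<in> borel_measurable borel" unfolding q_def by measurable
    show "q k \<in> borel_measurable \<mu>" by (subst measurable_cong_sets[OF sp(2) refl]) (rule qm)
  qed
  have pq: "p (-k) = integral\<^sup>L \<mu> (q k)" for k
  proof -
    have "p (-k) = (LINT x:{..-k}|\<mu>. exp (-k) - exp x)" using assms(5) unfolding \<mu>_def by simp
    also have "\<dots> = integral\<^sup>L \<mu> (q k)" unfolding set_lebesgue_integral_def
    proof (rule Bochner_Integration.integral_cong[OF refl])
      fix x :: real
      show "indicator {..-k} x *\<^sub>R (exp (-k) - exp x) = q k x"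
        unfolding q_def by (auto simp: indicator_def)
    qed
    finally show ?thesis .
  qed
  have ind_int: "integrable \<mu> (indicator {..a} :: real \<Rightarrow> real)" for a
    using sp by (intro integrable_real_indicator) (auto simp: less_top[symmetric])
  have pup: "p (-k) \<le> exp (-k) * F (-k)" for k
  proof -
    have "integral\<^sup>L \<mu> (q k) \<le> integral\<^sup>L \<mu> (\<lambda>x. exp (-k) * indicator {..-k} x)"
    proof (rule integral_mono[OF qint])
      show "integrable \<mu> (\<lambda>x. exp (-k) * indicator {..-k} x)" using ind_int by simp
      fix x :: real show "q k x \<le> exp (-k) * indicator {..-k} x"
        unfolding q_def by (auto simp: indicator_def)
    qed
    also have "\<dots> = exp (-k) * F (-k)" unfolding Fmu using sp by simp
    finally show ?thesis using pq by simp
  qed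
  have plow: "p (-k) \<ge> exp (-k) * (1 - exp (-1)) * F (-(k+1))" for k
  proof -
    have "integral\<^sup>L \<mu> (\<lambda>x. exp (-k) * (1 - exp (-1)) * indicator {..-(k+1)} x) \<le> integral\<^sup>L \<mu> (q k)"
    proof (rule integral_mono[OF _ qint])
      show "integrable \<mu> (\<lambda>x. exp (-k) * (1 - exp (-1)) * indicator {..-(k+1)} x)" using ind_int by simp
      fix x :: real show "exp (-k) * (1 - exp (-1)) * indicator {..-(k+1)} x \<le> q k x"
      proof (cases "x \<le> -(k+1)")
        case True
        then have "exp x \<le> exp (-(k+1))" by simp
        also have "exp (-(k+1)) = exp (-k) * exp (-1)" by (simp add: exp_add[symmetric])
        finally show ?thesis using True unfolding q_def by (simp add: algebra_simps)
      next
        case False then show ?thesis unfolding q_def by (simp add: indicator_def)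
      qed
    qed
    moreover have "integral\<^sup>L \<mu> (\<lambda>x. exp (-k) * (1 - exp (-1)) * indicator {..-(k+1)} x)
       = exp (-k) * (1 - exp (-1)) * F (-(k+1))" unfolding Fmu using sp by simp
    ultimately show ?thesis using pq by simp
  qed
  have pmono: "p (-y) \<le> p (-x)" if "x \<le> y" for x y
    unfolding pq
  proof (rule integral_mono[OF qint qint])
    fix t :: real
    have ee: "exp (-y) \<le> exp (-x)" using that by simp
    show "q y t \<le> q x t" unfolding q_def by (intro max.mono) (use ee in linarith)+
  qed
  have hmeas: "(\<lambda>k. - ln (p (-k))) \<in> borel_measurable borel"
  proof -
    have "mono (\<lambda>k. - p (-k))" using pmono by (auto simp: mono_def)
    then have m: "(\<lambda>k. - p (-k)) \<in> borel_measurable borel" by (rule borel_measurable_mono)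
    have "(\<lambda>k. - ln (- p (-k))) \<in> borel_measurable borel" using m by measurable
    then show ?thesis by (simp add: ln_minus)
  qed
  obtain \<epsilon> where eps: "\<epsilon> > 0" "integrable M (\<lambda>\<omega>. exp (- \<epsilon> * X \<omega>))" using assms(4) by blast
  define C where "C = integral\<^sup>L M (\<lambda>\<omega>. exp (- \<epsilon> * X \<omega>))"
  have Fexp: "F (-k) \<le> exp (- \<epsilon> * k) * C" for k
  proof -
    have S: "{\<omega> \<in> space M. X \<omega> \<le> -k} \<in> sets M" using assms(2) by measurable
    have "F (-k) = integral\<^sup>L M (indicator {\<omega> \<in> space M. X \<omega> \<le> -k})"
      using assms(3) S by (simp add: Int_absorb2)
    also have "\<dots> \<le> integral\<^sup>L M (\<lambda>\<omega>. exp (- \<epsilon> * k) * exp (- \<epsilon> * X \<omega>))"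
    proof (rule integral_mono)
      show "integrable M (indicator {\<omega> \<in> space M. X \<omega> \<le> -k} :: 'a \<Rightarrow> real)"
        using S by (intro integrable_real_indicator) (auto simp: less_top[symmetric])
      show "integrable M (\<lambda>\<omega>. exp (- \<epsilon> * k) * exp (- \<epsilon> * X \<omega>))" using eps by simp
      fix \<omega>
      show "indicator {\<omega> \<in> space M. X \<omega> \<le> -k} \<omega> \<le> exp (- \<epsilon> * k) * exp (- \<epsilon> * X \<omega>)"
      proof (cases "\<omega> \<in> space M \<and> X \<omega> \<le> -k")
        case True
        then have "\<epsilon> * X \<omega> \<le> \<epsilon> * (-k)" using eps by (intro mult_left_mono) auto
        then have "0 \<le> - \<epsilon> * k + - \<epsilon> * X \<omega>" by simp
        then have one: "1 \<le> exp (- \<epsilon> * k + - \<epsilon> * X \<omega>)" by simp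
        have eq: "exp (- \<epsilon> * k) * exp (- \<epsilon> * X \<omega>) = exp (- \<epsilon> * k + - \<epsilon> * X \<omega>)"
          by (rule mult_exp_exp)
        have I: "indicator {\<omega> \<in> space M. X \<omega> \<le> -k} \<omega> = (1::real)" using True by (simp add: indicator_def)
        show ?thesis unfolding I eq by (rule one)
      next
        case False
        have I: "indicator {\<omega> \<in> space M. X \<omega> \<le> -k} \<omega> = (0::real)" using False by (simp add: indicator_def)
        show ?thesis unfolding I by simp
      qed
    qed
    also have "\<dots> = exp (- \<epsilon> * k) * C" unfolding C_def by simp
    finally show ?thesis .
  qed
  obtain \<alpha> where rv: "\<And>l. l > 0 \<Longrightarrow> ((\<lambda>x. - ln (F (- (l * x))) / - ln (F (- x))) \<longlongrightarrow> l powr \<alpha>) at_top"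
    using assms(6) unfolding regularly_varying_def by blast
  obtain K1 where K1: "\<And>x. x \<ge> K1 \<Longrightarrow> - ln (F (-x)) > 0"
    using assms(6) unfolding regularly_varying_def eventually_at_top_linorder by blast
  have Fpos: "F (-x) > 0" if "x \<ge> K1" for x
  proof -
    have "F (-x) \<noteq> 0" using K1[OF that] by auto
    then show ?thesis using Fnn[of "-x"] by simp
  qed
  define K where "K = max (max K1 1) (2 * \<bar>ln C\<bar> / \<epsilon>)"
  have K: "K > 0" "K \<ge> K1" unfolding K_def by auto
  have Cpos: "C > 0"
  proof -
    have "0 < F (-K)" using Fpos K by simp
    also have "\<dots> \<le> exp (- \<epsilon> * K) * C" by (rule Fexp)
    finally show ?thesis by (simp add: zero_less_mult_iff)
  qed
  define g where "g x = - ln (F (-x))" for x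
  define h where "h x = - ln (p (-x))" for x
  have gmono: "g x \<le> g y" if "K \<le> x" "x \<le> y" for x y
  proof -
    have "F (-y) \<le> F (-x)" using that by (intro Fmono) simp
    moreover have "F (-y) > 0" using Fpos that K by simp
    ultimately show ?thesis unfolding g_def by simp
  qed
  have glin: "(\<epsilon>/2) * x \<le> g x" if "K \<le> x" for x
  proof -
    have Fp: "F (-x) > 0" using Fpos that K by simp
    have "ln (F (-x)) \<le> ln (exp (- \<epsilon> * x) * C)" using Fp Fexp[of x] by simp
    also have "\<dots> = - \<epsilon> * x + ln C" using Cpos by (simp add: ln_mult)
    finally have "g x \<ge> \<epsilon> * x - ln C" unfolding g_def by simp
    moreover have "2 * \<bar>ln C\<bar> / \<epsilon> \<le> x" using that unfolding K_def by simp
    then have "2 * \<bar>ln C\<bar> \<le> \<epsilon> * x" using eps by (simp add: divide_le_eq mult.commute)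
    ultimately show ?thesis by linarith
  qed
  define d where "d = - 1 - ln (1 - exp (-1::real))"
  have e1: "0 < 1 - exp (-1::real)" by simp
  have hb: "x + g x \<le> h x \<and> h x \<le> (x+1) + g (x+1) + d" if x: "K \<le> x" for x
  proof -
    have F1: "F (-x) > 0" "F (-(x+1)) > 0" using Fpos[of x] Fpos[of "x+1"] x K by auto
    have lowpos: "0 < exp (-x) * (1 - exp (-1)) * F (-(x+1))" using F1 e1 by simp
    then have pp: "p (-x) > 0" using plow[of x] by linarith
    have "ln (p (-x)) \<le> ln (exp (-x) * F (-x))" using pp pup[of x] by simp
    also have "\<dots> = -x + ln (F (-x))" using F1 by (simp add: ln_mult)
    finally have A: "x + g x \<le> h x" unfolding g_def h_def by simp
    have "ln (exp (-x) * (1 - exp (-1)) * F (-(x+1))) \<le> ln (p (-x))" using lowpos plow[of x] by simp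
    moreover have "ln (exp (-x) * (1 - exp (-1)) * F (-(x+1))) = -x + ln (1 - exp (-1)) + ln (F (-(x+1)))"
      using F1 e1 by (simp add: ln_mult)
    ultimately have B: "h x \<le> (x+1) + g (x+1) + d" unfolding g_def h_def d_def by simp
    show ?thesis using A B by simp
  qed
  have rvg: "((\<lambda>x. g (l*x) / g x) \<longlongrightarrow> l powr \<alpha>) at_top" if "l > 0" for l
    using rv[OF that] unfolding g_def by simp
  have main: "(\<exists>\<beta>. \<forall>l>0. ((\<lambda>x. h (l*x) / h x) \<longlongrightarrow> l powr \<beta>) at_top) \<and>
         ((\<lambda>x. h x / (x + g x)) \<longlongrightarrow> 1) at_top"
    by (rule rv_aux[OF K(1) gmono glin _ rvg hb]) (use eps in auto)
  have hpos: "eventually (\<lambda>x. h x > 0) at_top"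
    unfolding eventually_at_top_linorder
  proof (intro exI[of _ K] allI impI)
    fix x assume x: "K \<le> x"
    have "0 < (\<epsilon>/2) * x" using x K eps by (intro mult_pos_pos) auto
    then have "0 < x + g x" using glin[OF x] x K by linarith
    then show "h x > 0" using hb[OF x] by simp
  qed
  have "regularly_varying h"
    unfolding regularly_varying_def using main hpos hmeas unfolding h_def by blast
  moreover have "h \<sim>[at_top] (\<lambda>k. k - ln (F (-k)))"
    by (rule asymp_equivI') (use main in \<open>simp add: g_def\<close>)
  ultimately show ?thesis unfolding h_def by simp
qed

end
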